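(* Let $(E,\mathcal{I})$ be the partition matroid given by a partition $E_1,\dots,E_b$ of $E$ and integers $k_z$ with $2\le k_z\le|E_z|$, and let $\gamma=\min_{z\in[b]}\lfloor k_z/2\rfloor/k_z$. Suppose $f:2^E\times O^E\to\mathbb{R}_{\ge0}$ is worst-case monotone and worst-case submodular with respect to $p(\phi)$ and satisfies minimal dependency. Then the adaptive hybrid policy $\pi^m=\pi^{mw}@\pi^{ma}$ satisfies $f_{wc}(\pi^*_{wc})\le(1+\frac1\gamma)f_{wc}(\pi^m)$, where $\pi^*_{wc}$ maximizes $f_{wc}(\pi)$ over policies $\pi$ with $E(\pi,\phi)\in\mathcal{I}$ for all $\phi\in U^+$.
   Context: Setting. $E$ is a finite set of $n$ items and $O$ a finite set of states. A realization is a function $\phi:E\to O$; $p$ is a probability distribution (prior) on the set of all realizations, $\Phi$ denotes a random realization with law $p$, and $U^+=\{\phi: p(\phi)>0\}$. A partial realization is a function $\psi:S\to O$ with $S\subseteq E$, $\mathrm{dom}(\psi)=S$; it is identified with the set of pairs $\{(e,\psi(e)):e\in S\}$, so $\psi\subseteq\psi'$ means $\mathrm{dom}(\psi)\subseteq\mathrm{dom}(\psi')$ and they agree on $\mathrm{dom}(\psi)$. A realization $\phi$ is consistent with $\psi$, written $\phi\sim\psi$, if it agrees with $\psi$ on $\mathrm{dom}(\psi)$. Only partial realizations with $\Pr[\Phi\sim\psi]>0$ are considered, and $p(\phi\mid\psi)=\Pr[\Phi=\phi\mid\Phi\sim\psi]$. For $S\subseteq E$ and a partial realization $\psi$, $f(S,\psi)=\mathbb{E}[f(S,\Phi)\mid\Phi\sim\psi]$.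 For $e\notin\mathrm{dom}(\psi)$, let $O(e,\psi)=\{o\in O:\exists\phi\text{ with }p(\phi\mid\psi)>0,\ \phi(e)=o\}$ and define the worst-case marginal utility $f_{wc}(e\mid\psi)=\min_{o\in O(e,\psi)}\{f(\mathrm{dom}(\psi)\cup\{e\},\psi\cup\{(e,o)\})-f(\mathrm{dom}(\psi),\psi)\}$ and the expected marginal utility $f_{avg}(e\mid\psi)=\mathbb{E}[f(\mathrm{dom}(\psi)\cup\{e\},\Phi)-f(\mathrm{dom}(\psi),\Phi)\mid\Phi\sim\psi]$. $f$ is worst-case submodular if $f_{wc}(e\mid\psi)\ge f_{wc}(e\mid\psi')$ for all partial realizations $\psi\subseteq\psi'$ and all $e\in E\setminus\mathrm{dom}(\psi')$; it is worst-case monotone if $f_{wc}(e\mid\psi)\ge0$ for all $\psi$ and $e\notin\mathrm{dom}(\psi)$. $f$ satisfies minimal dependency if $f(\mathrm{dom}(\psi),\psi)=f(\mathrm{dom}(\psi),\phi)$ for every partial realization $\psi$ and every $\phi\in U^+$ with $\phi\sim\psi$. Policies. A (deterministic) policy $\pi$ is a rule which, given the current observation (the partial realization of the items selected so far), either selects a new item or stops; after an item $e$ is selected under realization $\phi$, the state $\phi(e)$ is observed. $E(\pi,\phi)$ is the set of items selected by $\pi$ under $\phi$, and $f_{wc}(\pi)=\min_{\phi\in U^+}f(E(\pi,\phi),\phi)$. The concatenation $\pi@\pi'$ runs $\pi$ and then runs $\pi'$ from scratch, ignoring the observations obtained by $\pi$; its selected set is the union of the two. Partition matroid: $\mathcal{I}=\{I\subseteq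 E:|I\cap E_z|\le k_z\ \forall z\in[b]\}$. Policy $\pi^{mw}$: starting from the empty observation $\psi=\emptyset$, for $z=1,\dots,b$ in turn, perform $\lfloor k_z/2\rfloor$ iterations, each selecting $e\in\arg\max_{e\in E_z\setminus\mathrm{dom}(\psi)}f_{wc}(e\mid\psi)$ for the current observation $\psi$, observing $\Phi(e)$ and adding $(e,\Phi(e))$ to $\psi$. Policy $\pi^{ma}$: identical except that each meta-round $z$ performs $\lceil k_z/2\rceil$ iterations and uses $f_{avg}(e\mid\psi)$ in place of $f_{wc}(e\mid\psi)$. Ties are broken arbitrarily. $\pi^m=\pi^{mw}@\pi^{ma}$. *)

theory Defs
  imports Complex_Main
begin

text \<open>Items are the elements of a finite type 'e (E = UNIV), states the elements of a
finite type 'o (O = UNIV). A realization is a total function 'e => 'o, a partial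
realization is a map 'e ~=> 'o (its domain is the set of observed items).\<close>

definition is_prior :: "(('e::finite \<Rightarrow> 'o::finite) \<Rightarrow> real) \<Rightarrow> bool" where
  "is_prior p \<longleftrightarrow> (\<forall>\<phi>. 0 \<le> p \<phi>) \<and> sum p UNIV = 1"

definition consistent :: "('e \<Rightarrow> 'o) \<Rightarrow> ('e \<rightharpoonup> 'o) \<Rightarrow> bool" where
  "consistent \<phi> \<psi> \<longleftrightarrow> (\<forall>e\<in>dom \<psi>. \<psi> e = Some (\<phi> e))"

definition pr_cons :: "(('e::finite \<Rightarrow> 'o::finite) \<Rightarrow> real) \<Rightarrow> ('e \<rightharpoonup> 'o) \<Rightarrow> real" where
  "pr_cons p \<psi> = (\<Sum>\<phi>\<in>{\<phi>. consistent \<phi> \<psi>}. p \<phi>)"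

definition cond_prob :: "(('e::finite \<Rightarrow> 'o::finite) \<Rightarrow> real) \<Rightarrow> ('e \<Rightarrow> 'o) \<Rightarrow> ('e \<rightharpoonup> 'o) \<Rightarrow> real" where
  "cond_prob p \<phi> \<psi> = (if consistent \<phi> \<psi> then p \<phi> / pr_cons p \<psi> else 0)"

definition f_part :: "('e::finite set \<Rightarrow> ('e \<Rightarrow> 'o::finite) \<Rightarrow> real) \<Rightarrow> (('e \<Rightarrow> 'o) \<Rightarrow> real)
    \<Rightarrow> 'e set \<Rightarrow> ('e \<rightharpoonup> 'o) \<Rightarrow> real" where
  "f_part f p S \<psi> = (\<Sum>\<phi>\<in>UNIV. cond_prob p \<phi> \<psi> * f S \<phi>)"

definition states_of :: "(('e::finite \<Rightarrow> 'o::finite) \<Rightarrow> real) \<Rightarrow> 'e \<Rightarrow> ('e \<rightharpoonup> 'o) \<Rightarrow> 'o set" where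
  "states_of p e \<psi> = {s. \<exists>\<phi>. cond_prob p \<phi> \<psi> > 0 \<and> \<phi> e = s}"

definition f_wc_marg :: "('e::finite set \<Rightarrow> ('e \<Rightarrow> 'o::finite) \<Rightarrow> real) \<Rightarrow> (('e \<Rightarrow> 'o) \<Rightarrow> real)
    \<Rightarrow> 'e \<Rightarrow> ('e \<rightharpoonup> 'o) \<Rightarrow> real" where
  "f_wc_marg f p e \<psi> =
     Min ((\<lambda>s. f_part f p (insert e (dom \<psi>)) (\<psi>(e \<mapsto> s)) - f_part f p (dom \<psi>) \<psi>)
          ` states_of p e \<psi>)"

definition f_avg_marg :: "('e::finite set \<Rightarrow> ('e \<Rightarrow> 'o::finite) \<Rightarrow> real) \<Rightarrow> (('e \<Rightarrow> 'o) \<Rightarrow> real)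
    \<Rightarrow> 'e \<Rightarrow> ('e \<rightharpoonup> 'o) \<Rightarrow> real" where
  "f_avg_marg f p e \<psi> =
     (\<Sum>\<phi>\<in>UNIV. cond_prob p \<phi> \<psi> * (f (insert e (dom \<psi>)) \<phi> - f (dom \<psi>) \<phi>))"

definition wc_submodular :: "('e::finite set \<Rightarrow> ('e \<Rightarrow> 'o::finite) \<Rightarrow> real) \<Rightarrow> (('e \<Rightarrow> 'o) \<Rightarrow> real) \<Rightarrow> bool" where
  "wc_submodular f p \<longleftrightarrow>
     (\<forall>\<psi> \<psi>' e. pr_cons p \<psi> > 0 \<and> pr_cons p \<psi>' > 0 \<and> \<psi> \<subseteq>\<^sub>m \<psi>' \<and> e \<notin> dom \<psi>'
        \<longrightarrow> f_wc_marg f p e \<psi>' \<le> f_wc_marg f p e \<psi>)"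

definition wc_monotone :: "('e::finite set \<Rightarrow> ('e \<Rightarrow> 'o::finite) \<Rightarrow> real) \<Rightarrow> (('e \<Rightarrow> 'o) \<Rightarrow> real) \<Rightarrow> bool" where
  "wc_monotone f p \<longleftrightarrow>
     (\<forall>\<psi> e. pr_cons p \<psi> > 0 \<and> e \<notin> dom \<psi> \<longrightarrow> 0 \<le> f_wc_marg f p e \<psi>)"

definition minimal_dependency :: "('e::finite set \<Rightarrow> ('e \<Rightarrow> 'o::finite) \<Rightarrow> real) \<Rightarrow> (('e \<Rightarrow> 'o) \<Rightarrow> real) \<Rightarrow> bool" where
  "minimal_dependency f p \<longleftrightarrow>
     (\<forall>\<psi> \<phi>. pr_cons p \<psi> > 0 \<and> p \<phi> > 0 \<and> consistent \<phi> \<psi>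
        \<longrightarrow> f_part f p (dom \<psi>) \<psi> = f (dom \<psi>) \<phi>)"

definition support :: "(('e \<Rightarrow> 'o) \<Rightarrow> real) \<Rightarrow> ('e \<Rightarrow> 'o) set" where
  "support p = {\<phi>. p \<phi> > 0}"

text \<open>Deterministic policies: given the current observation, select an item (Some e) or stop (None).\<close>
definition policy_step :: "(('e \<rightharpoonup> 'o) \<Rightarrow> 'e option) \<Rightarrow> ('e \<Rightarrow> 'o) \<Rightarrow> ('e \<rightharpoonup> 'o) \<Rightarrow> ('e \<rightharpoonup> 'o)" where
  "policy_step \<pi> \<phi> \<psi> = (case \<pi> \<psi> of None \<Rightarrow> \<psi> | Some e \<Rightarrow> \<psi>(e \<mapsto> \<phi> e))"

text \<open>E(pi, phi): after card UNIV steps the execution has stabilised (every effective step adds a new item).\<close>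
definition selected :: "(('e::finite \<rightharpoonup> 'o) \<Rightarrow> 'e option) \<Rightarrow> ('e \<Rightarrow> 'o) \<Rightarrow> 'e set" where
  "selected \<pi> \<phi> = dom ((policy_step \<pi> \<phi> ^^ card (UNIV :: 'e set)) Map.empty)"

definition policy_wc :: "('e::finite set \<Rightarrow> ('e \<Rightarrow> 'o::finite) \<Rightarrow> real) \<Rightarrow> (('e \<Rightarrow> 'o) \<Rightarrow> real)
    \<Rightarrow> (('e \<rightharpoonup> 'o) \<Rightarrow> 'e option) \<Rightarrow> real" where
  "policy_wc f p \<pi> = Min ((\<lambda>\<phi>. f (selected \<pi> \<phi>) \<phi>) ` support p)"

text \<open>f_wc(pi @ pi'): the concatenation selects the union of the two selected sets.\<close>
definition concat_wc :: "('e::finite set \<Rightarrow> ('e \<Rightarrow> 'o::finite) \<Rightarrow> real) \<Rightarrow> (('e \<Rightarrow> 'o) \<Rightarrow> real)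
    \<Rightarrow> (('e \<rightharpoonup> 'o) \<Rightarrow> 'e option) \<Rightarrow> (('e \<rightharpoonup> 'o) \<Rightarrow> 'e option) \<Rightarrow> real" where
  "concat_wc f p \<pi> \<pi>' = Min ((\<lambda>\<phi>. f (selected \<pi> \<phi> \<union> selected \<pi>' \<phi>) \<phi>) ` support p)"

definition partition_matroid :: "nat \<Rightarrow> (nat \<Rightarrow> 'e::finite set) \<Rightarrow> (nat \<Rightarrow> nat) \<Rightarrow> bool" where
  "partition_matroid b parts k \<longleftrightarrow>
     (\<forall>z\<in>{1..b}. 2 \<le> k z \<and> k z \<le> card (parts z)) \<and>
     (\<forall>z\<in>{1..b}. \<forall>z'\<in>{1..b}. z \<noteq> z' \<longrightarrow> parts z \<inter> parts z' = {}) \<and>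
     (\<Union>z\<in>{1..b}. parts z) = UNIV"

definition indep :: "nat \<Rightarrow> (nat \<Rightarrow> 'e set) \<Rightarrow> (nat \<Rightarrow> nat) \<Rightarrow> 'e set \<Rightarrow> bool" where
  "indep b parts k I \<longleftrightarrow> (\<forall>z\<in>{1..b}. card (I \<inter> parts z) \<le> k z)"

definition gamma :: "nat \<Rightarrow> (nat \<Rightarrow> nat) \<Rightarrow> real" where
  "gamma b k = Min ((\<lambda>z. real (k z div 2) / real (k z)) ` {1..b})"

text \<open>Schedules of the meta-rounds: the part index used at each iteration.\<close>
definition mw_sched :: "nat \<Rightarrow> (nat \<Rightarrow> nat) \<Rightarrow> nat list" where
  "mw_sched b k = concat (map (\<lambda>z. replicate (k z div 2) z) [1..<Suc b])"

definition ma_sched :: "nat \<Rightarrow> (nat \<Rightarrow> nat) \<Rightarrow> nat list" where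
  "ma_sched b k = concat (map (\<lambda>z. replicate ((k z + 1) div 2) z) [1..<Suc b])"

text \<open>A tie-breaking selection rule sel is greedy w.r.t. score g and schedule sched: at an
observation psi (with |dom psi| = t iterations done), sel psi is a maximiser of g(. | psi)
over E_{sched ! t} - dom psi.\<close>
definition greedy_rule :: "(('e::finite \<Rightarrow> 'o::finite) \<Rightarrow> real) \<Rightarrow> nat list \<Rightarrow> (nat \<Rightarrow> 'e set)
    \<Rightarrow> ('e \<Rightarrow> ('e \<rightharpoonup> 'o) \<Rightarrow> real) \<Rightarrow> (('e \<rightharpoonup> 'o) \<Rightarrow> 'e) \<Rightarrow> bool" where
  "greedy_rule p sched parts g sel \<longleftrightarrow>
     (\<forall>\<psi>. pr_cons p \<psi> > 0 \<and> card (dom \<psi>) < length sched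
            \<and> parts (sched ! card (dom \<psi>)) - dom \<psi> \<noteq> {}
        \<longrightarrow> sel \<psi> \<in> parts (sched ! card (dom \<psi>)) - dom \<psi>
            \<and> (\<forall>e\<in>parts (sched ! card (dom \<psi>)) - dom \<psi>. g e \<psi> \<le> g (sel \<psi>) \<psi>))"

definition greedy_policy :: "nat list \<Rightarrow> (('e \<rightharpoonup> 'o) \<Rightarrow> 'e) \<Rightarrow> ('e \<rightharpoonup> 'o) \<Rightarrow> 'e option" where
  "greedy_policy sched sel \<psi> = (if card (dom \<psi>) < length sched then Some (sel \<psi>) else None)"

end

theory Submission
  imports Defs
begin

lemma pr_cons_nonneg: "is_prior p \<Longrightarrow> 0 \<le> pr_cons p \<psi>"
  unfolding pr_cons_def is_prior_def by (simp add: sum_nonneg)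

lemma pr_cons_pos:
  assumes "is_prior p" "p \<phi> > 0" "consistent \<phi> \<psi>"
  shows "pr_cons p \<psi> > 0"
proof -
  have "p \<phi> \<le> pr_cons p \<psi>" unfolding pr_cons_def
    by (rule member_le_sum) (use assms in \<open>auto simp: is_prior_def\<close>)
  then show ?thesis using assms by simp
qed

lemma pr_cons_ex:
  assumes "is_prior p" "pr_cons p \<psi> > 0"
  shows "\<exists>\<phi>. p \<phi> > 0 \<and> consistent \<phi> \<psi>"
proof (rule ccontr)
  assume "\<not> ?thesis"
  then have "\<forall>\<phi>\<in>{\<phi>. consistent \<phi> \<psi>}. p \<phi> \<le> 0" by (auto simp: not_less[symmetric])
  then have "pr_cons p \<psi> \<le> 0" unfolding pr_cons_def by (intro sum_nonpos) auto
  then show False using assms by simp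
qed

lemma cond_prob_posD:
  assumes "is_prior p" "cond_prob p \<phi> \<psi> > 0"
  shows "consistent \<phi> \<psi> \<and> p \<phi> > 0"
proof -
  have c: "consistent \<phi> \<psi>" using assms(2) unfolding cond_prob_def by (auto split: if_splits)
  then have "p \<phi> / pr_cons p \<psi> > 0" using assms(2) unfolding cond_prob_def by simp
  moreover have "0 \<le> p \<phi>" using assms(1) by (simp add: is_prior_def)
  moreover have "0 \<le> pr_cons p \<psi>" using assms(1) by (rule pr_cons_nonneg)
  ultimately show ?thesis using c by (auto simp: zero_less_divide_iff)
qed

lemma cond_prob_posI:
  assumes "is_prior p" "consistent \<phi> \<psi>" "p \<phi> > 0"
  shows "cond_prob p \<phi> \<psi> > 0"
  using pr_cons_pos[OF assms(1,3,2)] assms unfolding cond_prob_def by simp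

lemma consistent_upd: "consistent \<phi> \<psi> \<Longrightarrow> consistent \<phi> (\<psi>(e \<mapsto> \<phi> e))"
  unfolding consistent_def by auto

lemma consistent_le: "\<omega> \<subseteq>\<^sub>m \<Psi> \<Longrightarrow> consistent \<phi> \<Psi> \<Longrightarrow> consistent \<phi> \<omega>"
proof -
  assume a: "\<omega> \<subseteq>\<^sub>m \<Psi>" "consistent \<phi> \<Psi>"
  show ?thesis unfolding consistent_def
  proof
    fix e assume e: "e \<in> dom \<omega>"
    then have "\<omega> e = \<Psi> e" using a(1) unfolding map_le_def by blast
    moreover have "e \<in> dom \<Psi>" using e a(1) map_le_implies_dom_le by blast
    ultimately show "\<omega> e = Some (\<phi> e)" using a(2) unfolding consistent_def by simp
  qed
qed

lemma states_of_nonempty: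
  assumes "is_prior p" "pr_cons p \<psi> > 0"
  shows "states_of p e \<psi> \<noteq> {}"
proof -
  obtain \<phi> where "p \<phi> > 0" "consistent \<phi> \<psi>" using pr_cons_ex[OF assms] by blast
  then have "cond_prob p \<phi> \<psi> > 0" using cond_prob_posI assms(1) by blast
  then show ?thesis unfolding states_of_def by blast
qed

lemma wc_marg_attained:
  assumes "is_prior p" "pr_cons p \<psi> > 0"
  shows "\<exists>s\<in>states_of p e \<psi>. f_wc_marg f p e \<psi> =
     f_part f p (insert e (dom \<psi>)) (\<psi>(e \<mapsto> s)) - f_part f p (dom \<psi>) \<psi>"
proof -
  have "f_wc_marg f p e \<psi> \<in> (\<lambda>s. f_part f p (insert e (dom \<psi>)) (\<psi>(e \<mapsto> s)) - f_part f p (dom \<psi>) \<psi>)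
          ` states_of p e \<psi>"
    unfolding f_wc_marg_def
    by (rule Min_in) (use states_of_nonempty[OF assms] in auto)
  then show ?thesis by auto
qed

lemma states_of_upd_pos:
  assumes "is_prior p" "s \<in> states_of p e \<psi>"
  shows "pr_cons p (\<psi>(e \<mapsto> s)) > 0"
proof -
  obtain \<phi> where "cond_prob p \<phi> \<psi> > 0" "\<phi> e = s" using assms(2) unfolding states_of_def by blast
  then have "consistent \<phi> \<psi>" "p \<phi> > 0" using cond_prob_posD[OF assms(1)] by auto
  then have "consistent \<phi> (\<psi>(e \<mapsto> s))" using \<open>\<phi> e = s\<close> consistent_upd by metis
  then show ?thesis using pr_cons_pos[OF assms(1) \<open>p \<phi> > 0\<close>] by blast
qed

lemma marg_le:
  assumes "is_prior p" "minimal_dependency f p" "p \<phi> > 0" "consistent \<phi> \<psi>"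
  shows "f_wc_marg f p e \<psi> \<le> f (insert e (dom \<psi>)) \<phi> - f (dom \<psi>) \<phi>"
proof -
  have pos: "pr_cons p \<psi> > 0" using pr_cons_pos assms by blast
  have c2: "consistent \<phi> (\<psi>(e \<mapsto> \<phi> e))" using assms(4) by (rule consistent_upd)
  have pos2: "pr_cons p (\<psi>(e \<mapsto> \<phi> e)) > 0" using pr_cons_pos assms(1,3) c2 by blast
  have "\<phi> e \<in> states_of p e \<psi>" unfolding states_of_def
    using cond_prob_posI[OF assms(1,4,3)] by blast
  then have "f_wc_marg f p e \<psi> \<le> f_part f p (insert e (dom \<psi>)) (\<psi>(e \<mapsto> \<phi> e)) - f_part f p (dom \<psi>) \<psi>"
    unfolding f_wc_marg_def by (intro Min_le finite_imageI finite) (rule imageI)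
  also have "f_part f p (insert e (dom \<psi>)) (\<psi>(e \<mapsto> \<phi> e)) = f (insert e (dom \<psi>)) \<phi>"
  proof -
    have "f_part f p (dom (\<psi>(e \<mapsto> \<phi> e))) (\<psi>(e \<mapsto> \<phi> e)) = f (dom (\<psi>(e \<mapsto> \<phi> e))) \<phi>"
      using assms(2) pos2 assms(3) c2 unfolding minimal_dependency_def by blast
    then show ?thesis by simp
  qed
  also have "f_part f p (dom \<psi>) \<psi> = f (dom \<psi>) \<phi>"
    using assms(2) pos assms(3,4) unfolding minimal_dependency_def by blast
  finally show ?thesis .
qed

definition restr :: "('e \<Rightarrow> 'o) \<Rightarrow> 'e set \<Rightarrow> ('e \<rightharpoonup> 'o)" where
  "restr \<phi> A = (\<lambda>x. if x \<in> A then Some (\<phi> x) else None)"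

lemma restr_dom[simp]: "dom (restr \<phi> A) = A" unfolding restr_def dom_def by auto
lemma restr_cons: "consistent \<phi> (restr \<phi> A)" unfolding restr_def consistent_def dom_def by auto

lemma mono1:
  assumes "is_prior p" "minimal_dependency f p" "wc_monotone f p" "p \<phi> > 0"
  shows "f A \<phi> \<le> f (insert e A) \<phi>"
proof (cases "e \<in> A")
  case True then show ?thesis by (simp add: insert_absorb)
next
  case False
  have "pr_cons p (restr \<phi> A) > 0" using pr_cons_pos[OF assms(1,4) restr_cons] .
  then have "0 \<le> f_wc_marg f p e (restr \<phi> A)" using assms(3) False unfolding wc_monotone_def by simp
  also have "\<dots> \<le> f (insert e A) \<phi> - f A \<phi>" using marg_le[OF assms(1,2,4) restr_cons] by simp
  finally show ?thesis by simp
qed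

lemma mono:
  assumes "is_prior p" "minimal_dependency f p" "wc_monotone f p" "p \<phi> > 0"
    and "A \<subseteq> (B :: 'e::finite set)"
  shows "f A \<phi> \<le> f B \<phi>"
proof -
  have "\<And>C::'e set. finite C \<Longrightarrow> f A \<phi> \<le> f (A \<union> C) \<phi>"
  proof -
    fix C :: "'e set" assume "finite C"
    then show "f A \<phi> \<le> f (A \<union> C) \<phi>"
    proof (induction C rule: finite_induct)
      case empty then show ?case by simp
    next
      case (insert x F)
      have "f (A \<union> F) \<phi> \<le> f (insert x (A \<union> F)) \<phi>" by (rule mono1[OF assms(1-4)])
      then show ?case using insert by simp
    qed
  qed
  moreover have "A \<union> (B - A) = B" using assms(5) by blast
  ultimately show ?thesis by (metis finite)
qed


lemma step_cons: "consistent \<phi> \<psi> \<Longrightarrow> consistent \<phi> (policy_step \<pi> \<phi> \<psi>)"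
  unfolding policy_step_def by (auto split: option.split intro: consistent_upd)

lemma step_le: "consistent \<phi> \<psi> \<Longrightarrow> \<psi> \<subseteq>\<^sub>m policy_step \<pi> \<phi> \<psi>"
  unfolding policy_step_def consistent_def map_le_def by (auto split: option.split)

lemma iter_cons: "consistent \<phi> \<psi> \<Longrightarrow> consistent \<phi> ((policy_step \<pi> \<phi> ^^ n) \<psi>)"
  by (induction n) (auto intro: step_cons)

lemma iter_le: "consistent \<phi> \<psi> \<Longrightarrow> j \<le> t \<Longrightarrow> (policy_step \<pi> \<phi> ^^ j) \<psi> \<subseteq>\<^sub>m (policy_step \<pi> \<phi> ^^ t) \<psi>"
proof (induction t)
  case 0 then show ?case by simp
next
  case (Suc t)
  show ?case
  proof (cases "j = Suc t")
    case True then show ?thesis by simp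
  next
    case False
    then have "(policy_step \<pi> \<phi> ^^ j) \<psi> \<subseteq>\<^sub>m (policy_step \<pi> \<phi> ^^ t) \<psi>" using Suc by simp
    also have "\<dots> \<subseteq>\<^sub>m (policy_step \<pi> \<phi> ^^ Suc t) \<psi>"
      using step_le[OF iter_cons[OF Suc.prems(1)]] by simp
    finally show ?thesis .
  qed
qed

lemma adv:
  fixes f :: "'e::finite set \<Rightarrow> ('e \<Rightarrow> 'o::finite) \<Rightarrow> real"
  assumes prior: "is_prior p" and md: "minimal_dependency f p" and sm: "wc_submodular f p"
    and posF: "pr_cons p \<psi>F > 0"
  shows "pr_cons p \<Psi> > 0 \<Longrightarrow> \<psi>F \<subseteq>\<^sub>m \<Psi> \<Longrightarrow> \<omega> \<subseteq>\<^sub>m \<Psi> \<Longrightarrow>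
    \<exists>\<phi>'. p \<phi>' > 0 \<and> consistent \<phi>' \<Psi> \<and>
      f (dom \<Psi> \<union> dom ((policy_step \<pi> \<phi>' ^^ m) \<omega>)) \<phi>'
        \<le> f_part f p (dom \<Psi>) \<Psi> + (\<Sum>e\<in>dom ((policy_step \<pi> \<phi>' ^^ m) \<omega>) - dom \<Psi>. f_wc_marg f p e \<psi>F)"
proof (induction m arbitrary: \<omega> \<Psi>)
  case 0
  obtain \<phi>' where \<phi>': "p \<phi>' > 0" "consistent \<phi>' \<Psi>" using pr_cons_ex[OF prior 0(1)] by blast
  have "dom \<omega> \<subseteq> dom \<Psi>" using 0(3) map_le_implies_dom_le by blast
  then have d: "dom \<Psi> \<union> dom \<omega> = dom \<Psi>" "dom \<omega> - dom \<Psi> = {}" by auto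
  have "f_part f p (dom \<Psi>) \<Psi> = f (dom \<Psi>) \<phi>'" using md 0(1) \<phi>' unfolding minimal_dependency_def by blast
  then show ?case using \<phi>' unfolding funpow_0 d(1) d(2) by (intro exI[of _ \<phi>']) simp
next
  case (Suc m)
  show ?case
  proof (cases "\<pi> \<omega>")
    case None
    then have st: "\<And>\<phi>. policy_step \<pi> \<phi> \<omega> = \<omega>" unfolding policy_step_def by simp
    show ?thesis using Suc.IH[OF Suc.prems] by (simp only: funpow_Suc_right o_apply st)
  next
    case (Some e)
    show ?thesis
    proof (cases "e \<in> dom \<Psi>")
      case True
      then obtain v where v: "\<Psi> e = Some v" by blast
      have le: "\<omega>(e \<mapsto> v) \<subseteq>\<^sub>m \<Psi>" using Suc.prems(3) v unfolding map_le_def by auto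
      obtain \<phi>' where \<phi>': "p \<phi>' > 0" "consistent \<phi>' \<Psi>"
        "f (dom \<Psi> \<union> dom ((policy_step \<pi> \<phi>' ^^ m) (\<omega>(e \<mapsto> v)))) \<phi>'
        \<le> f_part f p (dom \<Psi>) \<Psi> + (\<Sum>e\<in>dom ((policy_step \<pi> \<phi>' ^^ m) (\<omega>(e \<mapsto> v))) - dom \<Psi>. f_wc_marg f p e \<psi>F)"
        using Suc.IH[OF Suc.prems(1,2) le] by blast
      have "\<phi>' e = v" using \<phi>'(2) True v unfolding consistent_def by auto
      then have "policy_step \<pi> \<phi>' \<omega> = \<omega>(e \<mapsto> v)" using Some unfolding policy_step_def by simp
      then show ?thesis using \<phi>' by (intro exI[of _ \<phi>']) (simp only: funpow_Suc_right o_apply)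
    next
      case False
      obtain s where s: "s \<in> states_of p e \<Psi>"
        "f_wc_marg f p e \<Psi> = f_part f p (insert e (dom \<Psi>)) (\<Psi>(e \<mapsto> s)) - f_part f p (dom \<Psi>) \<Psi>"
        using wc_marg_attained[OF prior Suc.prems(1)] by blast
      have pos': "pr_cons p (\<Psi>(e \<mapsto> s)) > 0" using states_of_upd_pos[OF prior s(1)] .
      have le1: "\<psi>F \<subseteq>\<^sub>m \<Psi>(e \<mapsto> s)" using Suc.prems(2) False unfolding map_le_def by (auto simp: dom_def)
      have le2: "\<omega>(e \<mapsto> s) \<subseteq>\<^sub>m \<Psi>(e \<mapsto> s)" using Suc.prems(3) by (rule map_le_upd)
      obtain \<phi>' where \<phi>': "p \<phi>' > 0" "consistent \<phi>' (\<Psi>(e \<mapsto> s))"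
        "f (dom (\<Psi>(e \<mapsto> s)) \<union> dom ((policy_step \<pi> \<phi>' ^^ m) (\<omega>(e \<mapsto> s)))) \<phi>'
        \<le> f_part f p (dom (\<Psi>(e \<mapsto> s))) (\<Psi>(e \<mapsto> s)) + (\<Sum>e\<in>dom ((policy_step \<pi> \<phi>' ^^ m) (\<omega>(e \<mapsto> s))) - dom (\<Psi>(e \<mapsto> s)). f_wc_marg f p e \<psi>F)"
        using Suc.IH[OF pos' le1 le2] by blast
      have "\<Psi> \<subseteq>\<^sub>m \<Psi>(e \<mapsto> s)" using False unfolding map_le_def by auto
      then have c1: "consistent \<phi>' \<Psi>" using consistent_le \<phi>'(2) by blast
      have ps: "\<phi>' e = s" using \<phi>'(2) unfolding consistent_def by auto
      then have stp: "policy_step \<pi> \<phi>' \<omega> = \<omega>(e \<mapsto> s)" using Some unfolding policy_step_def by simp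
      define W where "W = dom ((policy_step \<pi> \<phi>' ^^ m) (\<omega>(e \<mapsto> s)))"
      have "consistent \<phi>' (\<omega>(e \<mapsto> s))" using consistent_le[OF le2 \<phi>'(2)] .
      then have "\<omega>(e \<mapsto> s) \<subseteq>\<^sub>m (policy_step \<pi> \<phi>' ^^ m) (\<omega>(e \<mapsto> s))"
        using iter_le[of \<phi>' "\<omega>(e \<mapsto> s)" 0 m \<pi>] by simp
      then have eW: "e \<in> W" unfolding W_def using map_le_implies_dom_le by fastforce
      have dd: "dom (\<Psi>(e \<mapsto> s)) = insert e (dom \<Psi>)" by simp
      have u: "dom (\<Psi>(e \<mapsto> s)) \<union> W = dom \<Psi> \<union> W" using eW by auto
      have wd: "W - dom \<Psi> = insert e (W - dom (\<Psi>(e \<mapsto> s)))" using eW False by auto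
      have sumeq: "(\<Sum>x\<in>W - dom \<Psi>. f_wc_marg f p x \<psi>F) = f_wc_marg f p e \<psi>F + (\<Sum>x\<in>W - dom (\<Psi>(e \<mapsto> s)). f_wc_marg f p x \<psi>F)"
        unfolding wd by (subst sum.insert) auto
      have "f_wc_marg f p e \<Psi> \<le> f_wc_marg f p e \<psi>F"
        using sm posF Suc.prems(1,2) False unfolding wc_submodular_def by blast
      then have "f_part f p (dom (\<Psi>(e \<mapsto> s))) (\<Psi>(e \<mapsto> s)) \<le> f_part f p (dom \<Psi>) \<Psi> + f_wc_marg f p e \<psi>F"
        using s(2) dd by simp
      then have "f (dom \<Psi> \<union> W) \<phi>' \<le> f_part f p (dom \<Psi>) \<Psi> + (\<Sum>x\<in>W - dom \<Psi>. f_wc_marg f p x \<psi>F)"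
        using \<phi>'(3) unfolding W_def[symmetric] u sumeq by linarith
      then show ?thesis using \<phi>'(1) c1 stp unfolding W_def
        by (intro exI[of _ \<phi>']) (simp only: funpow_Suc_right o_apply)
    qed
  qed
qed


lemma mw_set: "set (mw_sched b k) \<subseteq> {1..b}" by (auto simp: mw_sched_def)

lemma mw_count:
  assumes "z \<in> {1..b}"
  shows "card {j. j < length (mw_sched b k) \<and> mw_sched b k ! j = z} = k z div 2"
proof -
  have "card {j. j < length (mw_sched b k) \<and> mw_sched b k ! j = z} = length (filter (\<lambda>x. x = z) (mw_sched b k))"
    by (simp add: length_filter_conv_card)
  also have "\<dots> = sum_list (map (\<lambda>z'. length (filter (\<lambda>x. x = z) (replicate (k z' div 2) z'))) [1..<Suc b])"
    by (simp only: mw_sched_def filter_concat length_concat map_map o_def)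
  also have "\<dots> = sum_list (map (\<lambda>z'. if z' = z then k z' div 2 else 0) [1..<Suc b])"
    by (intro arg_cong[where f=sum_list] map_cong refl) (simp del: upt_Suc)
  also have "\<dots> = (\<Sum>z'\<in>{1..<Suc b}. if z' = z then k z' div 2 else 0)"
    by (simp add: sum_list_distinct_conv_sum_set)
  also have "\<dots> = k z div 2" using assms by simp
  finally show ?thesis .
qed

lemma consistent_empty[simp]: "consistent \<phi> Map.empty" unfolding consistent_def by simp

lemma greedy_run:
  fixes parts :: "nat \<Rightarrow> 'e::finite set" and \<phi> :: "'e \<Rightarrow> 'o::finite"
  assumes prior: "is_prior p" and pphi: "p \<phi> > 0"
    and gr: "greedy_rule p sched parts g sel"
    and setS: "set sched \<subseteq> {1..b}"
    and disj: "\<forall>z\<in>{1..b}. \<forall>z'\<in>{1..b}. z \<noteq> z' \<longrightarrow> parts z \<inter> parts z' = {}"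
    and cnt: "\<forall>z\<in>{1..b}. card {j. j < length sched \<and> sched ! j = z} \<le> card (parts z)"
    and psi_def: "\<psi> = (\<lambda>t. (policy_step (greedy_policy sched sel) \<phi> ^^ t) Map.empty)"
  shows "t \<le> length sched \<Longrightarrow> card (dom (\<psi> t)) = t \<and> dom (\<psi> t) = (\<lambda>j. sel (\<psi> j)) ` {..<t}
     \<and> (\<forall>j<t. sel (\<psi> j) \<in> parts (sched ! j) - dom (\<psi> j) \<and> \<psi> (Suc j) = (\<psi> j)(sel (\<psi> j) \<mapsto> \<phi> (sel (\<psi> j))))"
proof (induction t)
  case 0 then show ?case by (simp add: psi_def)
next
  case (Suc t)
  then have IH: "card (dom (\<psi> t)) = t" "dom (\<psi> t) = (\<lambda>j. sel (\<psi> j)) ` {..<t}"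
     "\<forall>j<t. sel (\<psi> j) \<in> parts (sched ! j) - dom (\<psi> j) \<and> \<psi> (Suc j) = (\<psi> j)(sel (\<psi> j) \<mapsto> \<phi> (sel (\<psi> j)))"
    by auto
  have tL: "t < length sched" using Suc.prems by simp
  define e where "e = sel (\<psi> t)"
  have stp: "\<psi> (Suc t) = (\<psi> t)(e \<mapsto> \<phi> e)"
    using IH(1) tL unfolding psi_def e_def by (simp add: policy_step_def greedy_policy_def)
  define z where "z = sched ! t"
  have zb: "z \<in> {1..b}" using setS tL unfolding z_def by (meson nth_mem subsetD)
  have A: "dom (\<psi> t) \<inter> parts z \<subseteq> (\<lambda>j. sel (\<psi> j)) ` {j. j < t \<and> sched ! j = z}"
  proof
    fix x assume x: "x \<in> dom (\<psi> t) \<inter> parts z"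
    then obtain j where j: "j < t" "x = sel (\<psi> j)" using IH(2) by auto
    have "x \<in> parts (sched ! j)" using IH(3) j by auto
    moreover have "sched ! j \<in> {1..b}" using setS j tL by (meson nth_mem subsetD less_trans)
    ultimately have "sched ! j = z" using disj zb x by blast
    then show "x \<in> (\<lambda>j. sel (\<psi> j)) ` {j. j < t \<and> sched ! j = z}" using j by blast
  qed
  have "card (dom (\<psi> t) \<inter> parts z) \<le> card ((\<lambda>j. sel (\<psi> j)) ` {j. j < t \<and> sched ! j = z})"
    using A by (intro card_mono) auto
  also have "\<dots> \<le> card {j. j < t \<and> sched ! j = z}" by (rule card_image_le) auto
  also have "\<dots> < card {j. j < length sched \<and> sched ! j = z}"
    by (rule psubset_card_mono) (use tL z_def in auto)
  also have "\<dots> \<le> card (parts z)" using cnt zb by blast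
  finally have lt: "card (dom (\<psi> t) \<inter> parts z) < card (parts z)" .
  have ne: "parts z - dom (\<psi> t) \<noteq> {}"
  proof
    assume "parts z - dom (\<psi> t) = {}"
    then have "dom (\<psi> t) \<inter> parts z = parts z" by blast
    then show False using lt by simp
  qed
  have cons: "consistent \<phi> (\<psi> t)" unfolding psi_def by (rule iter_cons) simp
  have pos: "pr_cons p (\<psi> t) > 0" using pr_cons_pos[OF prior pphi cons] .
  have H: "pr_cons p (\<psi> t) > 0 \<and> card (dom (\<psi> t)) < length sched
            \<and> parts (sched ! card (dom (\<psi> t))) - dom (\<psi> t) \<noteq> {}
        \<longrightarrow> sel (\<psi> t) \<in> parts (sched ! card (dom (\<psi> t))) - dom (\<psi> t)"
    using gr unfolding greedy_rule_def by blast
  have eIn: "e \<in> parts (sched ! t) - dom (\<psi> t)"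
    using H pos IH(1) tL ne unfolding e_def z_def by simp
  have d: "dom (\<psi> (Suc t)) = insert e (dom (\<psi> t))" using stp by simp
  have c: "card (dom (\<psi> (Suc t))) = Suc t" using d eIn IH(1) by simp
  have im: "dom (\<psi> (Suc t)) = (\<lambda>j. sel (\<psi> j)) ` {..<Suc t}"
    using d IH(2) unfolding e_def lessThan_Suc by simp
  have "\<forall>j<Suc t. sel (\<psi> j) \<in> parts (sched ! j) - dom (\<psi> j) \<and> \<psi> (Suc j) = (\<psi> j)(sel (\<psi> j) \<mapsto> \<phi> (sel (\<psi> j)))"
    using IH(3) eIn stp unfolding e_def by (auto simp: less_Suc_eq)
  then show ?case using c im by blast
qed


theorem lemma1:
  fixes f :: "'e::finite set \<Rightarrow> ('e \<Rightarrow> 'o::finite) \<Rightarrow> real"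
    and p :: "('e \<Rightarrow> 'o) \<Rightarrow> real"
    and b :: nat and parts :: "nat \<Rightarrow> 'e set" and k :: "nat \<Rightarrow> nat"
    and sel_w sel_a :: "('e \<rightharpoonup> 'o) \<Rightarrow> 'e"
    and \<pi> :: "('e \<rightharpoonup> 'o) \<Rightarrow> 'e option"
  assumes "is_prior p"
    and "partition_matroid b parts k"
    and "\<forall>S \<phi>. 0 \<le> f S \<phi>"
    and "wc_monotone f p"
    and "wc_submodular f p"
    and "minimal_dependency f p"
    and "greedy_rule p (mw_sched b k) parts (f_wc_marg f p) sel_w"
    and "greedy_rule p (ma_sched b k) parts (f_avg_marg f p) sel_a"
    and "\<forall>\<phi>\<in>support p. indep b parts k (selected \<pi> \<phi>)"
  shows "policy_wc f p \<pi> \<le> (1 + 1 / gamma b k) *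
           concat_wc f p (greedy_policy (mw_sched b k) sel_w) (greedy_policy (ma_sched b k) sel_a)"
proof -
  note prior = assms(1) and fnn = assms(3) and wm = assms(4) and ws = assms(5) and md = assms(6)
    and gw = assms(7) and ind = assms(9)
  have kb: "\<forall>z\<in>{1..b}. 2 \<le> k z \<and> k z \<le> card (parts z)"
    and disj: "\<forall>z\<in>{1..b}. \<forall>z'\<in>{1..b}. z \<noteq> z' \<longrightarrow> parts z \<inter> parts z' = {}"
    and cover: "(\<Union>z\<in>{1..b}. parts z) = UNIV"
    using assms(2) unfolding partition_matroid_def by auto
  define sched where "sched = mw_sched b k"
  define L where "L = length sched"
  have setS: "set sched \<subseteq> {1..b}" unfolding sched_def by (rule mw_set)
  have cntG: "\<And>z. z \<in> {1..b} \<Longrightarrow> card {j. j < L \<and> sched ! j = z} = k z div 2"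
    unfolding L_def sched_def by (rule mw_count)
  have cnt: "\<forall>z\<in>{1..b}. card {j. j < length sched \<and> sched ! j = z} \<le> card (parts z)"
  proof
    fix z assume z: "z \<in> {1..b}"
    have "k z div 2 \<le> k z" by simp
    then show "card {j. j < length sched \<and> sched ! j = z} \<le> card (parts z)"
      using cntG[OF z] kb z unfolding L_def by fastforce
  qed
  have bpos: "{1..b} \<noteq> {}" using cover by auto
  have gle: "\<And>z. z \<in> {1..b} \<Longrightarrow> gamma b k \<le> real (k z div 2) / real (k z)"
    unfolding gamma_def by (intro Min_le) auto
  have gpos: "gamma b k > 0"
  proof -
    have "gamma b k \<in> (\<lambda>z. real (k z div 2) / real (k z)) ` {1..b}"
      unfolding gamma_def by (intro Min_in) (use bpos in auto)
    then obtain z where z: "z \<in> {1..b}" "gamma b k = real (k z div 2) / real (k z)" by blast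
    have "2 \<le> k z" using kb z by auto
    then have "0 < k z div 2" by simp
    then show ?thesis using z \<open>2 \<le> k z\<close> by simp
  qed
  have suppne: "support p \<noteq> {}"
  proof
    assume "support p = {}"
    then have "\<forall>\<phi>\<in>UNIV. p \<phi> \<le> 0" unfolding support_def by (auto simp: not_less[symmetric])
    then have "sum p UNIV \<le> 0" by (intro sum_nonpos) auto
    then show False using prior unfolding is_prior_def by simp
  qed
  define Sw where "Sw = selected (greedy_policy (mw_sched b k) sel_w)"
  define Sa where "Sa = selected (greedy_policy (ma_sched b k) sel_a)"
  have "concat_wc f p (greedy_policy (mw_sched b k) sel_w) (greedy_policy (ma_sched b k) sel_a)
        \<in> (\<lambda>\<phi>. f (Sw \<phi> \<union> Sa \<phi>) \<phi>) ` support p"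
    unfolding concat_wc_def Sw_def Sa_def by (intro Min_in) (use suppne in auto)
  then obtain \<phi>0 where \<phi>0: "\<phi>0 \<in> support p"
    "concat_wc f p (greedy_policy (mw_sched b k) sel_w) (greedy_policy (ma_sched b k) sel_a) = f (Sw \<phi>0 \<union> Sa \<phi>0) \<phi>0"
    by blast
  have p0: "p \<phi>0 > 0" using \<phi>0(1) unfolding support_def by simp
  define \<psi> where "\<psi> = (\<lambda>t. (policy_step (greedy_policy sched sel_w) \<phi>0 ^^ t) Map.empty)"
  have GR: "\<And>t. t \<le> L \<Longrightarrow> card (dom (\<psi> t)) = t \<and> dom (\<psi> t) = (\<lambda>j. sel_w (\<psi> j)) ` {..<t}
     \<and> (\<forall>j<t. sel_w (\<psi> j) \<in> parts (sched ! j) - dom (\<psi> j) \<and> \<psi> (Suc j) = (\<psi> j)(sel_w (\<psi> j) \<mapsto> \<phi>0 (sel_w (\<psi> j))))"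
    unfolding L_def by (rule greedy_run[OF prior p0 gw[folded sched_def] setS disj cnt \<psi>_def])
  have "card (dom (\<psi> L)) = L" using GR by blast
  moreover have "card (dom (\<psi> L)) \<le> card (UNIV :: 'e set)" by (rule card_mono) auto
  ultimately have LU: "L \<le> card (UNIV :: 'e set)" by simp
  define \<psi>F where "\<psi>F = \<psi> (card (UNIV :: 'e set))"
  define S where "S = dom \<psi>F"
  have S_eq: "S = Sw \<phi>0" unfolding S_def \<psi>F_def \<psi>_def Sw_def selected_def sched_def ..
  have cons: "\<And>t. consistent \<phi>0 (\<psi> t)" unfolding \<psi>_def by (rule iter_cons) simp
  have posj: "\<And>t. pr_cons p (\<psi> t) > 0" using pr_cons_pos[OF prior p0 cons] .
  have posF: "pr_cons p \<psi>F > 0" unfolding \<psi>F_def by (rule posj)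
  have leF: "\<And>j. j \<le> card (UNIV :: 'e set) \<Longrightarrow> \<psi> j \<subseteq>\<^sub>m \<psi>F"
    unfolding \<psi>F_def \<psi>_def by (rule iter_le) simp_all
  have domj: "\<And>j. j \<le> L \<Longrightarrow> dom (\<psi> j) \<subseteq> S"
    unfolding S_def using leF LU map_le_implies_dom_le by (meson le_trans)
  obtain \<phi>' where \<phi>': "p \<phi>' > 0" "consistent \<phi>' \<psi>F"
    "f (dom \<psi>F \<union> dom ((policy_step \<pi> \<phi>' ^^ card (UNIV :: 'e set)) Map.empty)) \<phi>'
        \<le> f_part f p (dom \<psi>F) \<psi>F + (\<Sum>e\<in>dom ((policy_step \<pi> \<phi>' ^^ card (UNIV :: 'e set)) Map.empty) - dom \<psi>F. f_wc_marg f p e \<psi>F)"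
    using adv[OF prior md ws posF posF map_le_refl map_le_empty] by blast
  define E' where "E' = selected \<pi> \<phi>'"
  define T where "T = E' - S"
  define c where "c = (\<lambda>e. f_wc_marg f p e \<psi>F)"
  have fpart: "f_part f p (dom \<psi>F) \<psi>F = f S \<phi>0"
    using md posF p0 cons unfolding minimal_dependency_def S_def \<psi>F_def by blast
  have main1: "f (S \<union> E') \<phi>' \<le> f S \<phi>0 + (\<Sum>e\<in>T. c e)"
    using \<phi>'(3) unfolding fpart E'_def[symmetric, unfolded selected_def] T_def c_def
    unfolding S_def E'_def selected_def by simp
  define g where "g = (\<lambda>j. f_wc_marg f p (sel_w (\<psi> j)) (\<psi> j))"
  define G where "G = (\<lambda>z. {j. j < L \<and> sched ! j = z})"
  have gnn: "\<And>j. j < L \<Longrightarrow> 0 \<le> g j"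
  proof -
    fix j assume j: "j < L"
    then have "sel_w (\<psi> j) \<notin> dom (\<psi> j)" using GR[of L] by auto
    then show "0 \<le> g j" using wm posj unfolding wc_monotone_def g_def by blast
  qed
  have cnn: "\<And>e. e \<notin> S \<Longrightarrow> 0 \<le> c e"
    using wm posF unfolding wc_monotone_def c_def S_def by blast
  have ceg: "\<And>z e j. z \<in> {1..b} \<Longrightarrow> e \<in> T \<inter> parts z \<Longrightarrow> j \<in> G z \<Longrightarrow> c e \<le> g j"
  proof -
    fix z e j assume z: "z \<in> {1..b}" and e: "e \<in> T \<inter> parts z" and j: "j \<in> G z"
    have jL: "j < L" and sj: "sched ! j = z" using j unfolding G_def by auto
    have eS: "e \<notin> S" using e unfolding T_def by auto
    have "\<psi> j \<subseteq>\<^sub>m \<psi>F" using leF jL LU by simp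
    then have "c e \<le> f_wc_marg f p e (\<psi> j)"
      using ws posj posF eS unfolding wc_submodular_def c_def S_def by blast
    also have "\<dots> \<le> g j"
    proof -
      have "j \<le> L" using jL by simp
      then have cj: "card (dom (\<psi> j)) = j" using GR by blast
      have eI: "e \<in> parts (sched ! j) - dom (\<psi> j)" using e sj eS domj[of j] jL by auto
      have "pr_cons p (\<psi> j) > 0 \<and> card (dom (\<psi> j)) < length sched
            \<and> parts (sched ! card (dom (\<psi> j))) - dom (\<psi> j) \<noteq> {}
        \<longrightarrow> (\<forall>e\<in>parts (sched ! card (dom (\<psi> j))) - dom (\<psi> j). f_wc_marg f p e (\<psi> j) \<le> f_wc_marg f p (sel_w (\<psi> j)) (\<psi> j))"
        using gw unfolding greedy_rule_def sched_def by blast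
      then show ?thesis using posj cj jL eI unfolding g_def L_def by auto
    qed
    finally show "c e \<le> g j" .
  qed
  have part: "\<And>z. z \<in> {1..b} \<Longrightarrow> (\<Sum>e\<in>T \<inter> parts z. c e) \<le> (1 / gamma b k) * (\<Sum>j\<in>G z. g j)"
  proof -
    fix z assume z: "z \<in> {1..b}"
    define X where "X = (\<Sum>e\<in>T \<inter> parts z. c e)"
    define Y where "Y = (\<Sum>j\<in>G z. g j)"
    define n where "n = card (G z)"
    have n: "n = k z div 2" unfolding n_def G_def using cntG[OF z] .
    have kz: "2 \<le> k z" using kb z by auto
    have npos: "real n > 0" using n kz by simp
    have Xnn: "0 \<le> X" unfolding X_def using cnn by (intro sum_nonneg) (auto simp: T_def)
    have Ynn: "0 \<le> Y" unfolding Y_def using gnn by (intro sum_nonneg) (auto simp: G_def)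
    have "real n * X = (\<Sum>e\<in>T \<inter> parts z. \<Sum>j\<in>G z. c e)" unfolding X_def n_def
      by (simp add: sum_distrib_left)
    also have "\<dots> \<le> (\<Sum>e\<in>T \<inter> parts z. \<Sum>j\<in>G z. g j)"
      by (intro sum_mono) (use ceg z in auto)
    also have "\<dots> = real (card (T \<inter> parts z)) * Y" unfolding Y_def by simp
    also have "\<dots> \<le> real (k z) * Y"
    proof -
      have "indep b parts k E'" using ind \<phi>'(1) unfolding E'_def support_def by simp
      then have "card (E' \<inter> parts z) \<le> k z" using z unfolding indep_def by blast
      moreover have "card (T \<inter> parts z) \<le> card (E' \<inter> parts z)" unfolding T_def by (rule card_mono) auto
      ultimately show ?thesis using Ynn by (intro mult_right_mono) auto
    qed
    finally have nX: "real n * X \<le> real (k z) * Y" .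
    have gk: "gamma b k * real (k z) \<le> real n" using gle[OF z] kz n by (simp add: le_divide_eq)
    have "real n * (gamma b k * X) = gamma b k * (real n * X)" by simp
    also have "\<dots> \<le> gamma b k * (real (k z) * Y)" using nX gpos by (intro mult_left_mono) auto
    also have "\<dots> = (gamma b k * real (k z)) * Y" by simp
    also have "\<dots> \<le> real n * Y" using gk Ynn by (rule mult_right_mono)
    finally have "gamma b k * X \<le> Y" using npos by simp
    then have "X \<le> Y / gamma b k" using gpos by (simp add: le_divide_eq mult.commute)
    then show "X \<le> (1 / gamma b k) * Y" by simp
  qed
  have Tsplit: "(\<Sum>e\<in>T. c e) = (\<Sum>z\<in>{1..b}. \<Sum>e\<in>T \<inter> parts z. c e)"
  proof -
    have "T = (\<Union>z\<in>{1..b}. T \<inter> parts z)" using cover by blast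
    then have "(\<Sum>e\<in>T. c e) = (\<Sum>e\<in>(\<Union>z\<in>{1..b}. T \<inter> parts z). c e)" by simp
    also have "\<dots> = (\<Sum>z\<in>{1..b}. \<Sum>e\<in>T \<inter> parts z. c e)"
      by (rule sum.UNION_disjoint) (use disj in auto)
    finally show ?thesis .
  qed
  have Gsplit: "(\<Sum>j<L. g j) = (\<Sum>z\<in>{1..b}. \<Sum>j\<in>G z. g j)"
  proof -
    have "{..<L} = (\<Union>z\<in>{1..b}. G z)"
      using setS unfolding G_def L_def by (auto dest: nth_mem)
    then have "(\<Sum>j<L. g j) = (\<Sum>j\<in>(\<Union>z\<in>{1..b}. G z). g j)" by simp
    also have "\<dots> = (\<Sum>z\<in>{1..b}. \<Sum>j\<in>G z. g j)"
      by (rule sum.UNION_disjoint) (auto simp: G_def)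
    finally show ?thesis .
  qed
  have tel: "(\<Sum>j<L. g j) \<le> f S \<phi>0"
  proof -
    have "(\<Sum>j<L. g j) \<le> (\<Sum>j<L. f (dom (\<psi> (Suc j))) \<phi>0 - f (dom (\<psi> j)) \<phi>0)"
    proof (rule sum_mono)
      fix j assume "j \<in> {..<L}"
      then have j: "j < L" by simp
      have "\<psi> (Suc j) = (\<psi> j)(sel_w (\<psi> j) \<mapsto> \<phi>0 (sel_w (\<psi> j)))" using GR[of L] j by auto
      then have "dom (\<psi> (Suc j)) = insert (sel_w (\<psi> j)) (dom (\<psi> j))" by simp
      then show "g j \<le> f (dom (\<psi> (Suc j))) \<phi>0 - f (dom (\<psi> j)) \<phi>0"
        unfolding g_def using marg_le[OF prior md p0 cons] by simp
    qed
    also have "\<dots> = f (dom (\<psi> L)) \<phi>0 - f (dom (\<psi> 0)) \<phi>0" by (rule sum_lessThan_telescope)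
    also have "\<dots> \<le> f S \<phi>0"
    proof -
      have "f (dom (\<psi> L)) \<phi>0 \<le> f S \<phi>0" using mono[OF prior md wm p0 domj[of L]] by simp
      moreover have "0 \<le> f (dom (\<psi> 0)) \<phi>0" using fnn by blast
      ultimately show ?thesis by simp
    qed
    finally show ?thesis .
  qed
  have key: "(\<Sum>e\<in>T. c e) \<le> (1 / gamma b k) * f S \<phi>0"
  proof -
    have "(\<Sum>e\<in>T. c e) \<le> (\<Sum>z\<in>{1..b}. (1 / gamma b k) * (\<Sum>j\<in>G z. g j))"
      unfolding Tsplit by (intro sum_mono part) auto
    also have "\<dots> = (1 / gamma b k) * (\<Sum>j<L. g j)" unfolding Gsplit by (simp add: sum_distrib_left)
    also have "\<dots> \<le> (1 / gamma b k) * f S \<phi>0" using tel gpos by (intro mult_left_mono) auto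
    finally show ?thesis .
  qed
  have "policy_wc f p \<pi> \<le> f E' \<phi>'"
    unfolding policy_wc_def E'_def using \<phi>'(1) by (intro Min_le) (auto simp: support_def)
  also have "\<dots> \<le> f (S \<union> E') \<phi>'" using mono[OF prior md wm \<phi>'(1)] by auto
  also have "\<dots> \<le> f S \<phi>0 + (1 / gamma b k) * f S \<phi>0" using main1 key by linarith
  also have "\<dots> = (1 + 1 / gamma b k) * f S \<phi>0" by (simp add: algebra_simps)
  also have "\<dots> \<le> (1 + 1 / gamma b k) * f (Sw \<phi>0 \<union> Sa \<phi>0) \<phi>0"
    using mono[OF prior md wm p0, of "Sw \<phi>0" "Sw \<phi>0 \<union> Sa \<phi>0"] gpos S_eq
    by (intro mult_left_mono) (auto simp: add_pos_pos)
  finally show ?thesis using \<phi>0(2) by simp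
qed

end
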